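(* Let $(M_0,d,\Gamma)$ be a cone-like space and let $\{x_n\}$ be a Cauchy sequence in $(M_0,d)$ which does not converge in $M_0$. Then there exist $x\in M_0$ and a sequence $\{f_n\}$ of elements of $\Gamma$ with $\lim_{n\to\infty}\rho(f_n)=0$ such that the Cauchy sequences $\{x_n\}$ and $\{f_n(x)\}$ are equivalent.
   Context: A cone-like space is a locally compact metric space $(M_0,d)$ together with a finitely generated, non-trivial group $\Gamma$ acting freely and properly discontinuously on $M_0$ by homotheties (i.e. for each $f\in\Gamma$ there is $\rho(f)>0$ with $d(f(x),f(y))=\rho(f)d(x,y)$ for all $x,y$), such that the identity is the only element of $\Gamma$ acting as an isometry, and such that the quotient $M_0/\Gamma$ is compact. Two Cauchy sequences $\{a_n\},\{b_n\}$ are equivalent if $d(a_n,b_n)\to0$. *)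

theory Defs
  imports "HOL-Analysis.Analysis"
begin

text \<open>The group \<Gamma> is represented by the set of maps through which it acts on M0
  (a free action is faithful). M0 is the whole carrier of a metric-space type.\<close>

inductive_set gen_group :: "('a \<Rightarrow> 'a) set \<Rightarrow> ('a \<Rightarrow> 'a) set" for S where
  gen_id: "id \<in> gen_group S"
| gen_base: "f \<in> S \<Longrightarrow> f \<in> gen_group S"
| gen_comp: "f \<in> gen_group S \<Longrightarrow> g \<in> gen_group S \<Longrightarrow> f \<circ> g \<in> gen_group S"
| gen_inv: "f \<in> gen_group S \<Longrightarrow> inv f \<in> gen_group S"

definition map_group :: "('a \<Rightarrow> 'a) set \<Rightarrow> bool" where
  "map_group G \<longleftrightarrow> id \<in> G \<and> (\<forall>f\<in>G. bij f \<and> inv f \<in> G) \<and> (\<forall>f\<in>G. \<forall>g\<in>G. f \<circ> g \<in> G)"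

definition finitely_generated_map_group :: "('a \<Rightarrow> 'a) set \<Rightarrow> bool" where
  "finitely_generated_map_group G \<longleftrightarrow> (\<exists>S. finite S \<and> S \<subseteq> G \<and> G = gen_group S)"

definition acts_freely :: "('a \<Rightarrow> 'a) set \<Rightarrow> bool" where
  "acts_freely G \<longleftrightarrow> (\<forall>f\<in>G. \<forall>x. f x = x \<longrightarrow> f = id)"

text \<open>Properly discontinuous action (locally compact setting): every compact set
  meets only finitely many of its translates.\<close>
definition properly_discontinuous :: "('a::topological_space \<Rightarrow> 'a) set \<Rightarrow> bool" where
  "properly_discontinuous G \<longleftrightarrow>
     (\<forall>K. compact K \<longrightarrow> finite {f \<in> G. f ` K \<inter> K \<noteq> {}})"

definition orbit :: "('a \<Rightarrow> 'a) set \<Rightarrow> 'a \<Rightarrow> 'a set" where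
  "orbit G x = (\<lambda>f. f x) ` G"

definition compact_quotient :: "('a::topological_space \<Rightarrow> 'a) set \<Rightarrow> bool" where
  "compact_quotient G \<longleftrightarrow>
     (\<exists>Q :: 'a set topology. quotient_map euclidean Q (orbit G) \<and> compact_space Q)"

definition homothety_ratio :: "('a::metric_space \<Rightarrow> 'a) \<Rightarrow> real \<Rightarrow> bool" where
  "homothety_ratio f r \<longleftrightarrow> r > 0 \<and> (\<forall>x y. dist (f x) (f y) = r * dist x y)"

definition cone_like :: "('a::metric_space \<Rightarrow> 'a) set \<Rightarrow> (('a \<Rightarrow> 'a) \<Rightarrow> real) \<Rightarrow> bool" where
  "cone_like G \<rho> \<longleftrightarrow>
     locally_compact_space (euclidean :: 'a topology) \<and>
     map_group G \<and> finitely_generated_map_group G \<and> G \<noteq> {id} \<and>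
     acts_freely G \<and> properly_discontinuous G \<and>
     (\<forall>f\<in>G. homothety_ratio f (\<rho> f)) \<and>
     (\<forall>f\<in>G. (\<forall>x y. dist (f x) (f y) = dist x y) \<longrightarrow> f = id) \<and>
     compact_quotient G"

end

theory Submission
  imports Defs
begin

lemma homothety_cont:
  assumes "homothety_ratio f r" shows "continuous_on S f"
proof -
  have "r-lipschitz_on S f" using assms unfolding homothety_ratio_def lipschitz_on_def by auto
  thus ?thesis by (rule lipschitz_on_continuous_on)
qed

lemma mg_facts:
  assumes "map_group G" "f \<in> G"
  shows "bij f" "inv f \<in> G" "f \<circ> inv f = id" "inv f \<circ> f = id"
  using assms unfolding map_group_def
  by (auto simp: bij_is_surj bij_is_inj surj_iff[symmetric] inj_iff[symmetric])

lemma cover: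
  assumes cl: "cone_like G \<rho>"
  shows "\<exists>P r. finite P \<and> P \<noteq> {} \<and> (\<forall>p\<in>P. r p > 0 \<and> compact (cball p (2 * r p)))
     \<and> (\<forall>y. \<exists>p\<in>P. \<exists>z\<in>ball p (r p). \<exists>g\<in>G. y = g z)"
proof -
  have lc: "locally_compact_space (euclidean::'a topology)" and mg: "map_group G"
    and hom: "\<forall>f\<in>G. homothety_ratio f (\<rho> f)" and cq: "compact_quotient G"
    using cl unfolding cone_like_def by auto
  have "\<forall>p::'a. \<exists>e>0. compact (cball p (2*e))"
  proof
    fix p :: 'a
    from lc obtain U K where UK: "open U" "compact K" "p \<in> U" "U \<subseteq> K"
      unfolding locally_compact_space_def by (metis UNIV_I topspace_euclidean open_openin compactin_euclidean_iff)
    then obtain e where e: "e>0" "ball p e \<subseteq> U" using open_contains_ball by blast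
    have sub: "cball p (e/2) \<subseteq> K" using e UK by (auto simp: subset_iff)
    have "compact (K \<inter> cball p (e/2))" using UK by auto
    moreover have "K \<inter> cball p (e/2) = cball p (2*(e/4))" using sub by auto
    ultimately show "\<exists>e>0. compact (cball p (2*e))" using e by (intro exI[of _ "e/4"]) auto
  qed
  then have "\<exists>r::'a\<Rightarrow>real. \<forall>p. r p > 0 \<and> compact (cball p (2 * r p))" by (rule choice)
  then obtain r where r: "\<And>p::'a. r p > 0 \<and> compact (cball p (2 * r p))" by blast
  from cq obtain Q where qm: "quotient_map euclidean Q (orbit G)" and cs: "compact_space Q"
    unfolding compact_quotient_def by auto
  have idG: "id \<in> G" using mg unfolding map_group_def by auto
  have compG: "f \<in> G \<Longrightarrow> g \<in> G \<Longrightarrow> f \<circ> g \<in> G" for f g using mg unfolding map_group_def by auto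
  have self: "y \<in> orbit G y" for y using idG unfolding orbit_def by (metis id_apply image_eqI)
  have orbeq: "orbit G (g z) = orbit G z" if g: "g \<in> G" for g z
  proof
    show "orbit G (g z) \<subseteq> orbit G z" unfolding orbit_def using compG[OF _ g]
      by (auto simp: image_iff) (metis comp_apply)
    show "orbit G z \<subseteq> orbit G (g z)" unfolding orbit_def
    proof
      fix y assume "y \<in> (\<lambda>f. f z) ` G"
      then obtain h where h: "h \<in> G" "y = h z" by auto
      have "h \<circ> inv g \<in> G" using compG mg_facts[OF mg g] h by auto
      moreover have "(h \<circ> inv g) (g z) = y" using mg_facts(4)[OF mg g] h
        by (metis comp_apply id_apply)
      ultimately show "y \<in> (\<lambda>f. f (g z)) ` G" by (metis image_eqI)
    qed
  qed
  have tsQ: "topspace Q = range (orbit G)" using qm unfolding quotient_map_def by auto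
  have opn: "openin Q (orbit G ` ball p (r p))" for p
  proof -
    have pre: "{x \<in> topspace euclidean. orbit G x \<in> orbit G ` ball p (r p)} = (\<Union>g\<in>G. g ` ball p (r p))"
    proof (intro set_eqI iffI)
      fix x assume "x \<in> {x \<in> topspace euclidean. orbit G x \<in> orbit G ` ball p (r p)}"
      then obtain v where v: "v \<in> ball p (r p)" "orbit G x = orbit G v" by auto
      then have "x \<in> orbit G v" using self by metis
      then show "x \<in> (\<Union>g\<in>G. g ` ball p (r p))" using v unfolding orbit_def by blast
    next
      fix x assume "x \<in> (\<Union>g\<in>G. g ` ball p (r p))"
      then obtain g v where "g \<in> G" "v \<in> ball p (r p)" "x = g v" by auto
      then show "x \<in> {x \<in> topspace euclidean. orbit G x \<in> orbit G ` ball p (r p)}"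
        using orbeq by auto
    qed
    have "open (g ` ball p (r p))" if g: "g \<in> G" for g
    proof -
      have bi: "bij (inv g)" using mg_facts[OF mg g] bij_imp_bij_inv by auto
      have "g ` ball p (r p) = inv g -` ball p (r p)"
        using bij_vimage_eq_inv_image[OF bi] inv_inv_eq[OF mg_facts(1)[OF mg g]] by simp
      moreover have "continuous_on UNIV (inv g)"
        using homothety_cont hom mg_facts(2)[OF mg g] by blast
      ultimately show ?thesis using continuous_imp_open_vimage[of UNIV "inv g" "ball p (r p)"] by auto
    qed
    then have "open (\<Union>g\<in>G. g ` ball p (r p))" by auto
    then have "openin euclidean {x \<in> topspace euclidean. orbit G x \<in> orbit G ` ball p (r p)}"
      using pre by simp
    moreover have "orbit G ` ball p (r p) \<subseteq> topspace Q" using tsQ by auto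
    ultimately show ?thesis using qm unfolding quotient_map_def by blast
  qed
  have "topspace Q \<subseteq> \<Union>(range (\<lambda>p. orbit G ` ball p (r p)))"
    using tsQ r by auto
  then obtain F where F: "finite F" "F \<subseteq> range (\<lambda>p. orbit G ` ball p (r p))" "topspace Q \<subseteq> \<Union>F"
    using cs opn unfolding compact_space_alt by (metis (no_types, lifting) rangeE)
  then obtain P where P: "finite P" "F = (\<lambda>p. orbit G ` ball p (r p)) ` P"
    using finite_subset_image by metis
  have cov: "\<exists>p\<in>P. \<exists>z\<in>ball p (r p). \<exists>g\<in>G. y = g z" for y
  proof -
    have "orbit G y \<in> topspace Q" using tsQ by auto
    then obtain p where p: "p \<in> P" "orbit G y \<in> orbit G ` ball p (r p)" using F P by auto
    then obtain z where z: "z \<in> ball p (r p)" "orbit G y = orbit G z" by auto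
    then have "y \<in> orbit G z" using self by metis
    then obtain g where "g \<in> G" "y = g z" unfolding orbit_def by auto
    then show ?thesis using p z by blast
  qed
  then have "P \<noteq> {}" by auto
  then show ?thesis using P cov r by blast
qed


theorem lemma2p3:
  fixes G :: "('a::metric_space \<Rightarrow> 'a) set" and \<rho> :: "('a \<Rightarrow> 'a) \<Rightarrow> real"
    and xs :: "nat \<Rightarrow> 'a"
  assumes "cone_like G \<rho>"
    and "Cauchy xs"
    and "\<not> convergent xs"
  shows "\<exists>x fs. (\<forall>n. fs n \<in> G) \<and> (\<lambda>n. \<rho> (fs n)) \<longlonglongrightarrow> 0 \<and>
           (\<lambda>n. dist (xs n) (fs n x)) \<longlonglongrightarrow> 0"
proof -
  have mg: "map_group G" and hom: "\<And>f. f \<in> G \<Longrightarrow> homothety_ratio f (\<rho> f)"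
    and pd: "properly_discontinuous G"
    using assms(1) unfolding cone_like_def by auto
  have compG: "f \<in> G \<Longrightarrow> g \<in> G \<Longrightarrow> f \<circ> g \<in> G" for f g using mg unfolding map_group_def by auto
  obtain P and r :: "'a \<Rightarrow> real" where P: "finite P" "P \<noteq> {}"
    and rP: "\<And>p. p \<in> P \<Longrightarrow> r p > 0 \<and> compact (cball p (2 * r p))"
    and cov: "\<And>y. \<exists>p\<in>P. \<exists>z\<in>ball p (r p). \<exists>g\<in>G. y = g z"
    using cover[OF assms(1)] by metis
  define K1 where "K1 = (\<Union>p\<in>P. cball p (r p))"
  define K2 where "K2 = (\<Union>p\<in>P. cball p (2 * r p))"
  define R0 where "R0 = Min (r ` P)"
  have R0: "R0 > 0" unfolding R0_def using P rP by (simp add: Min_gr_iff)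
  have R0le: "p \<in> P \<Longrightarrow> R0 \<le> r p" for p unfolding R0_def using P by simp
  have cK2: "compact K2" unfolding K2_def using P(1) rP by (intro compact_UN) auto
  have K12: "K1 \<subseteq> K2" unfolding K1_def K2_def by (intro UN_mono subset_cball) (auto dest: rP)
  have "bounded K1" unfolding K1_def using P(1) by (intro bounded_UN) auto
  then obtain B where B: "\<And>a b. a \<in> K1 \<Longrightarrow> b \<in> K1 \<Longrightarrow> dist a b \<le> B"
    unfolding bounded_two_points by blast
  have cov': "\<exists>g. g \<in> G \<and> (\<exists>k. k \<in> K1 \<and> y = g k)" for y
  proof -
    obtain p z h where "p \<in> P" "z \<in> ball p (r p)" "h \<in> G" "y = h z" using cov[of y] by blast
    moreover then have "z \<in> K1" unfolding K1_def by (auto intro!: bexI[of _ p])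
    ultimately show ?thesis by blast
  qed
  then have "\<forall>n. \<exists>g. g \<in> G \<and> (\<exists>k. k \<in> K1 \<and> xs n = g k)" by blast
  then have "\<exists>g. \<forall>n. g n \<in> G \<and> (\<exists>k. k \<in> K1 \<and> xs n = g n k)" by (rule choice)
  then obtain g where g: "\<And>n. g n \<in> G" and gk: "\<forall>n. \<exists>k. k \<in> K1 \<and> xs n = g n k" by blast
  from gk have "\<exists>k. \<forall>n. k n \<in> K1 \<and> xs n = g n (k n)" by (rule choice)
  then obtain k where k: "\<And>n. k n \<in> K1" "\<And>n. xs n = g n (k n)" by blast
  have rpos: "\<rho> (g n) > 0" for n using hom[OF g[of n]] unfolding homothety_ratio_def by auto
  have hd: "dist (g n a) (g n b) = \<rho> (g n) * dist a b" for n a b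
    using hom[OF g[of n]] unfolding homothety_ratio_def by auto
  obtain x0 where x0: "x0 \<in> P" using P by auto
  have x0K: "x0 \<in> K1" unfolding K1_def using x0 rP[OF x0] by (auto intro!: bexI[of _ x0])
  have lim: "(\<lambda>n. \<rho> (g n)) \<longlonglongrightarrow> 0"
  proof (rule ccontr)
    assume "\<not> (\<lambda>n. \<rho> (g n)) \<longlonglongrightarrow> 0"
    then have "\<exists>\<epsilon>>0. \<forall>N. \<exists>n\<ge>N. \<epsilon> \<le> \<rho> (g n)"
      unfolding LIMSEQ_iff by (auto simp: not_less abs_of_pos rpos)
    then obtain \<epsilon> where \<epsilon>: "\<epsilon> > 0" and freq: "\<And>N. \<exists>n\<ge>N. \<epsilon> \<le> \<rho> (g n)"
      by blast
    obtain N where N: "\<And>m n. m \<ge> N \<Longrightarrow> n \<ge> N \<Longrightarrow> dist (xs m) (xs n) < \<epsilon> * R0"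
      using metric_CauchyD[OF assms(2), of "\<epsilon> * R0"] \<epsilon> R0 by auto
    obtain n where n: "n \<ge> N" "\<epsilon> \<le> \<rho> (g n)" using freq by blast
    define Fin where "Fin = {f \<in> G. f ` K2 \<inter> K2 \<noteq> {}}"
    have fin: "finite Fin" using pd[unfolded properly_discontinuous_def, rule_format, OF cK2] unfolding Fin_def .
    have gnG: "g n \<in> G" by (rule g)
    have invG: "inv (g n) \<in> G" and bijg: "bij (g n)" and gi: "g n \<circ> inv (g n) = id"
      using mg_facts[OF mg gnG] by auto
    define C where "C = (\<Union>h\<in>Fin. (g n \<circ> h) ` K2)"
    have mem: "xs m \<in> C" if m: "m \<ge> N" for m
    proof -
      obtain p where p: "p \<in> P" "k n \<in> cball p (r p)" using k(1)[of n] unfolding K1_def by auto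
      define y where "y = inv (g n) (xs m)"
      have gy: "g n y = xs m" unfolding y_def using bijg by (simp add: bij_is_surj surj_f_inv_f)
      have "dist (xs m) (xs n) = dist (g n y) (g n (k n))" using gy k(2)[of n] by simp
      also have "\<dots> = \<rho> (g n) * dist y (k n)" by (rule hd)
      finally have "dist (xs m) (xs n) = \<rho> (g n) * dist y (k n)" .
      moreover have "dist (xs m) (xs n) < \<epsilon> * R0" using N m n by auto
      moreover have "\<epsilon> * R0 \<le> \<rho> (g n) * R0" using n R0 by auto
      ultimately have "\<rho> (g n) * dist y (k n) < \<rho> (g n) * R0" by linarith
      then have "dist y (k n) < R0" using rpos[of n] by (simp add: mult_less_cancel_left_pos)
      then have "dist y (k n) < r p" using R0le[OF p(1)] by linarith
      then have "dist p y \<le> 2 * r p" using p(2) dist_triangle[of p y "k n"]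
        by (simp add: dist_commute)
      then have yK2: "y \<in> K2" unfolding K2_def using p(1) by auto
      define h where "h = inv (g n) \<circ> g m"
      have hG: "h \<in> G" unfolding h_def using compG[OF invG g[of m]] .
      have "h (k m) = y" unfolding h_def y_def using k(2)[of m] by simp
      moreover have "k m \<in> K2" using k(1) K12 by auto
      ultimately have "y \<in> h ` K2 \<inter> K2" using yK2 by (metis IntI image_eqI)
      then have "h \<in> Fin" unfolding Fin_def using hG by auto
      moreover have "(g n \<circ> h) (k m) = xs m" using gy \<open>h (k m) = y\<close> by simp
      ultimately show ?thesis unfolding C_def using \<open>k m \<in> K2\<close> by (metis UN_I image_eqI)
    qed
    have cC: "compact C" unfolding C_def
    proof (rule compact_UN[OF fin])
      fix h assume "h \<in> Fin"
      then have "h \<in> G" unfolding Fin_def by simp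
      then have "g n \<circ> h \<in> G" using compG[OF gnG] by simp
      then show "compact ((g n \<circ> h) ` K2)"
        by (rule compact_continuous_image[OF homothety_cont[OF hom] cK2])
    qed
    have cau: "Cauchy (xs \<circ> (\<lambda>m. m + N))"
      by (rule Cauchy_subseq_Cauchy[OF assms(2)]) (simp add: strict_mono_def)
    have inC: "\<forall>m. (xs \<circ> (\<lambda>m. m + N)) m \<in> C" using mem by simp
    have "\<exists>l\<in>C. (xs \<circ> (\<lambda>m. m + N)) \<longlonglongrightarrow> l"
      by (rule compact_imp_complete[OF cC, unfolded complete_def, rule_format, OF conjI[OF inC cau]])
    then obtain l where "(xs \<circ> (\<lambda>m. m + N)) \<longlonglongrightarrow> l" by (elim bexE)
    then have "xs \<longlonglongrightarrow> l" using LIMSEQ_offset[of xs N l] by (simp add: comp_def)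
    then have "convergent xs" by (rule convergentI)
    then show False using assms(3) by (rule notE[rotated])
  qed
  have "(\<lambda>n. dist (xs n) (g n x0)) \<longlonglongrightarrow> 0"
  proof (rule Lim_null_comparison)
    show "\<forall>\<^sub>F n in sequentially. norm (dist (xs n) (g n x0)) \<le> B * \<rho> (g n)"
    proof (rule always_eventually, rule allI)
      fix n
      have "norm (dist (xs n) (g n x0)) = \<rho> (g n) * dist (k n) x0" using hd k(2) rpos[of n] by simp
      also have "\<dots> \<le> \<rho> (g n) * B" using B[OF k(1) x0K] rpos[of n] by (simp add: mult_left_mono)
      finally show "norm (dist (xs n) (g n x0)) \<le> B * \<rho> (g n)" by (simp add: mult.commute)
    qed
    show "(\<lambda>n. B * \<rho> (g n)) \<longlonglongrightarrow> 0" using tendsto_mult_left_zero[OF lim, of B] by (simp add: mult.commute)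
  qed
  then show ?thesis using g lim by (intro exI[of _ x0] exI[of _ g]) auto
qed

end
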